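(* Let $X,Y,Z$ be complex Banach spaces, $\emptyset\ne I\subseteq\mathbb R^n$, let $\mathcal B$ be a non-empty collection of non-empty subsets of $X$ such that every $x\in X$ belongs to some $B\in\mathcal B$, and let $\mathrm R$ be a non-empty collection of sequences in $\mathbb R^n$ such that $\mathbf t+\mathbf b(l)\in I$ whenever $\mathbf t\in I$, $\mathbf b\in\mathrm R$, $l\in\mathbb N$. Suppose $F:I\times X\to Y$ is $(\mathrm R,\mathcal B)$-multi-almost periodic and $G:I\times Y\to Z$ is $(\mathrm R',\mathcal B')$-multi-almost periodic, where $\mathrm R'$ consists of all sequences from $\mathrm R$ together with all their subsequences and $\mathcal B':=\{\bigcup_{\mathbf t\in I}F(\mathbf t;B):B\in\mathcal B\}$. If there exists $L>0$ with $\|G(\mathbf t;x)-G(\mathbf t;y)\|_Z\le L\|x-y\|_Y$ for all $\mathbf t\in I$, $x,y\in Y$, then $W(\mathbf t;x):=G(\mathbf t;F(\mathbf t;x))$, $\mathbf t\in I$, $x\in X$, is $(\mathrm R,\mathcal B)$-multi-almost periodic.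
   Context: For Banach spaces $U,V$, a collection $\mathcal C$ of subsets of $U$ and a collection $\mathrm S$ of sequences in $\mathbb R^n$ with $\mathbf t+\mathbf b(l)\in I$ for $\mathbf t\in I$, $\mathbf b\in\mathrm S$, a continuous $H:I\times U\to V$ is $(\mathrm S,\mathcal C)$-multi-almost periodic if for every $C\in\mathcal C$ and every $(\mathbf b_k)\in\mathrm S$ there exist a subsequence $(\mathbf b_{k_l})$ and $H^\ast:I\times U\to V$ with $H(\mathbf t+\mathbf b_{k_l};u)\to H^\ast(\mathbf t;u)$ uniformly for $u\in C$, $\mathbf t\in I$. *)

theory Defs
  imports "HOL-Analysis.Analysis"
begin

class complex_normed_vector = real_normed_vector +
  fixes scaleC :: "complex \<Rightarrow> 'a \<Rightarrow> 'a"
  assumes scaleC_add_right: "scaleC a (x + y) = scaleC a x + scaleC a y"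
    and scaleC_add_left: "scaleC (a + b) x = scaleC a x + scaleC b x"
    and scaleC_scaleC: "scaleC a (scaleC b x) = scaleC (a * b) x"
    and scaleC_one: "scaleC 1 x = x"
    and scaleC_of_real: "scaleC (of_real r) x = scaleR r x"
    and norm_scaleC: "norm (scaleC a x) = cmod a * norm x"

definition multi_almost_periodic ::
  "(real^('n::finite)) set \<Rightarrow> (nat \<Rightarrow> real^'n) set \<Rightarrow> 'u set set
     \<Rightarrow> (real^'n \<Rightarrow> 'u::real_normed_vector \<Rightarrow> 'v::real_normed_vector) \<Rightarrow> bool"
  where "multi_almost_periodic I S C H \<longleftrightarrow>
    continuous_on (I \<times> UNIV) (\<lambda>(t, u). H t u) \<and>
    (\<forall>B\<in>C. \<forall>b\<in>S. \<exists>k::nat \<Rightarrow> nat. strict_mono k \<and>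
       (\<exists>Hs :: real^'n \<Rightarrow> 'u \<Rightarrow> 'v.
          uniform_limit (I \<times> B) (\<lambda>l (t, u). H (t + b (k l)) u) (\<lambda>(t, u). Hs t u) sequentially))"

end

theory Submission
  imports Defs
begin

theorem theorem2p45:
  fixes I :: "(real^'n) set"
    and R :: "(nat \<Rightarrow> real^'n) set"
    and \<B> :: "'x::{complex_normed_vector, banach} set set"
    and F :: "real^'n \<Rightarrow> 'x \<Rightarrow> 'y::{complex_normed_vector, banach}"
    and G :: "real^'n \<Rightarrow> 'y \<Rightarrow> 'z::{complex_normed_vector, banach}"
    and L :: real
  assumes "I \<noteq> {}"
    and "\<B> \<noteq> {}"
    and "\<forall>B\<in>\<B>. B \<noteq> {}"
    and "\<forall>x. \<exists>B\<in>\<B>. x \<in> B"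
    and "R \<noteq> {}"
    and "\<forall>t\<in>I. \<forall>b\<in>R. \<forall>l. t + b l \<in> I"
    and "multi_almost_periodic I R \<B> F"
    and "multi_almost_periodic I {b \<circ> k | b k. b \<in> R \<and> strict_mono k}
           {(\<Union>t\<in>I. F t ` B) | B. B \<in> \<B>} G"
    and "L > 0"
    and "\<forall>t\<in>I. \<forall>x y. norm (G t x - G t y) \<le> L * norm (x - y)"
  shows "multi_almost_periodic I R \<B> (\<lambda>t x. G t (F t x))"
proof -
  note A = assms
  have contF: "continuous_on (I \<times> UNIV) (\<lambda>(t, u). F t u)"
    using A(7) unfolding multi_almost_periodic_def by blast
  have contG: "continuous_on (I \<times> UNIV) (\<lambda>(t, u). G t u)"
    using A(8) unfolding multi_almost_periodic_def by blast
  have cont: "continuous_on (I \<times> UNIV) (\<lambda>(t, x). G t (F t x))"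
  proof -
    have c1: "continuous_on (I \<times> UNIV) (\<lambda>p. (fst p, (\<lambda>(t, u). F t u) p))"
      by (intro continuous_intros contF)
    have "continuous_on (I \<times> UNIV) ((\<lambda>(t, u). G t u) \<circ> (\<lambda>p. (fst p, (\<lambda>(t, u). F t u) p)))"
      by (rule continuous_on_compose[OF c1 continuous_on_subset[OF contG]]) auto
    then show ?thesis by (simp add: o_def case_prod_beta)
  qed
  have main: "\<exists>k::nat \<Rightarrow> nat. strict_mono k \<and>
       (\<exists>Hs :: real^'n \<Rightarrow> 'x \<Rightarrow> 'z.
          uniform_limit (I \<times> B) (\<lambda>l (t, u). G (t + b (k l)) (F (t + b (k l)) u)) (\<lambda>(t, u). Hs t u) sequentially)"
    if B: "B \<in> \<B>" and b: "b \<in> R" for B b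
  proof -
    obtain k1 Fs where k1: "strict_mono k1"
      and F1: "uniform_limit (I \<times> B) (\<lambda>l (t, u). F (t + b (k1 l)) u) (\<lambda>(t, u). Fs t u) sequentially"
      using A(7) B b unfolding multi_almost_periodic_def by blast
    have "b \<circ> k1 \<in> {b \<circ> k | b k. b \<in> R \<and> strict_mono k}" using b k1 by blast
    moreover have "(\<Union>t\<in>I. F t ` B) \<in> {(\<Union>t\<in>I. F t ` B) | B. B \<in> \<B>}" using B by blast
    ultimately obtain k2 Gs where k2: "strict_mono k2"
      and G1: "uniform_limit (I \<times> (\<Union>t\<in>I. F t ` B)) (\<lambda>l (t, u). G (t + (b \<circ> k1) (k2 l)) u) (\<lambda>(t, u). Gs t u) sequentially"
      using A(8) unfolding multi_almost_periodic_def by blast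
    have CF: "uniformly_Cauchy_on (I \<times> B) (\<lambda>l (t, u). F (t + b (k1 l)) u)"
      using F1 uniformly_convergent_Cauchy uniformly_convergentI by blast
    have CG: "uniformly_Cauchy_on (I \<times> (\<Union>t\<in>I. F t ` B)) (\<lambda>l (t, u). G (t + (b \<circ> k1) (k2 l)) u)"
      using G1 uniformly_convergent_Cauchy uniformly_convergentI by blast
    define k where "k = k1 \<circ> k2"
    have km: "strict_mono k" unfolding k_def using k1 k2 strict_mono_o by blast
    have CFk: "uniformly_Cauchy_on (I \<times> B) (\<lambda>l (t, u). F (t + b (k l)) u)"
    proof (rule uniformly_Cauchy_onI)
      fix e :: real assume "e > 0"
      then obtain M where M: "\<forall>x\<in>I \<times> B. \<forall>m\<ge>M. \<forall>n\<ge>M. dist ((\<lambda>l (t, u). F (t + b (k1 l)) u) m x) ((\<lambda>l (t, u). F (t + b (k1 l)) u) n x) < e"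
        using CF unfolding uniformly_Cauchy_on_def by blast
      have "\<forall>x\<in>I \<times> B. \<forall>m\<ge>M. \<forall>n\<ge>M. dist ((\<lambda>l (t, u). F (t + b (k l)) u) m x) ((\<lambda>l (t, u). F (t + b (k l)) u) n x) < e"
      proof (intro ballI allI impI)
        fix x m n assume "x \<in> I \<times> B" "M \<le> m" "M \<le> n"
        moreover have "m \<le> k2 m" "n \<le> k2 n" using k2 by (auto intro: seq_suble)
        ultimately show "dist ((\<lambda>l (t, u). F (t + b (k l)) u) m x) ((\<lambda>l (t, u). F (t + b (k l)) u) n x) < e"
          using M unfolding k_def by (auto simp: o_def)
      qed
      then show "\<exists>M. \<forall>x\<in>I \<times> B. \<forall>m\<ge>M. \<forall>n\<ge>M. dist ((\<lambda>l (t, u). F (t + b (k l)) u) m x) ((\<lambda>l (t, u). F (t + b (k l)) u) n x) < e" by blast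
    qed
    have "uniformly_Cauchy_on (I \<times> B) (\<lambda>l (t, u). G (t + b (k l)) (F (t + b (k l)) u))"
    proof (rule uniformly_Cauchy_onI)
      fix e :: real assume e: "e > 0"
      then have e1: "e / (2 * L) > 0" and e2: "e / 2 > 0" using A(9) by auto
      obtain M1 where M1: "\<And>t u m n. (t, u) \<in> I \<times> B \<Longrightarrow> m \<ge> M1 \<Longrightarrow> n \<ge> M1 \<Longrightarrow>
          dist (F (t + b (k m)) u) (F (t + b (k n)) u) < e / (2 * L)"
        using CFk e1 unfolding uniformly_Cauchy_on_def by fastforce
      obtain M2 where M2: "\<And>t y m n. (t, y) \<in> I \<times> (\<Union>t\<in>I. F t ` B) \<Longrightarrow> m \<ge> M2 \<Longrightarrow> n \<ge> M2 \<Longrightarrow>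
          dist (G (t + b (k m)) y) (G (t + b (k n)) y) < e / 2"
        using CG e2 unfolding uniformly_Cauchy_on_def k_def by fastforce
      have "dist (G (t + b (k m)) (F (t + b (k m)) u)) (G (t + b (k n)) (F (t + b (k n)) u)) < e"
        if tu: "(t, u) \<in> I \<times> B" and m: "m \<ge> max M1 M2" and n: "n \<ge> max M1 M2" for t u m n
      proof -
        have tI: "t \<in> I" and uB: "u \<in> B" using tu by auto
        have bk: "\<forall>l. b (k l) = b (k l)" by simp
        have sm: "t + b (k m) \<in> I" and sn: "t + b (k n) \<in> I" using A(6) tI b by auto
        have yB: "F (t + b (k n)) u \<in> (\<Union>t\<in>I. F t ` B)" using sn uB by blast
        have d1: "dist (G (t + b (k m)) (F (t + b (k m)) u)) (G (t + b (k m)) (F (t + b (k n)) u))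
            \<le> L * dist (F (t + b (k m)) u) (F (t + b (k n)) u)"
          using A(10) sm by (simp add: dist_norm)
        have "L * dist (F (t + b (k m)) u) (F (t + b (k n)) u) < L * (e / (2 * L))"
          using M1[OF tu] m n A(9) by (intro mult_strict_left_mono) auto
        also have "\<dots> = e / 2" using A(9) by simp
        finally have d1': "dist (G (t + b (k m)) (F (t + b (k m)) u)) (G (t + b (k m)) (F (t + b (k n)) u)) < e / 2"
          using d1 by linarith
        have d2: "dist (G (t + b (k m)) (F (t + b (k n)) u)) (G (t + b (k n)) (F (t + b (k n)) u)) < e / 2"
          using M2[of t "F (t + b (k n)) u" m n] tI yB m n by auto
        show ?thesis using dist_triangle[of "G (t + b (k m)) (F (t + b (k m)) u)" "G (t + b (k n)) (F (t + b (k n)) u)"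
            "G (t + b (k m)) (F (t + b (k n)) u)"] d1' d2 by linarith
      qed
      then show "\<exists>M. \<forall>x\<in>I \<times> B. \<forall>m\<ge>M. \<forall>n\<ge>M. dist ((\<lambda>l (t, u). G (t + b (k l)) (F (t + b (k l)) u)) m x) ((\<lambda>l (t, u). G (t + b (k l)) (F (t + b (k l)) u)) n x) < e"
        by (intro exI[of _ "max M1 M2"]) auto
    qed
    then obtain l where l: "uniform_limit (I \<times> B) (\<lambda>l (t, u). G (t + b (k l)) (F (t + b (k l)) u)) l sequentially"
      using Cauchy_uniformly_convergent unfolding uniformly_convergent_on_def by blast
    have "(\<lambda>(t, u). (curry l) t u) = l" by simp
    then show ?thesis using km l by (intro exI[of _ k] conjI exI[of _ "curry l"]) auto
  qed
  show ?thesis unfolding multi_almost_periodic_def using cont main by blast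
qed

end
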